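(* Let $\Sigma=\{a,b\}$ and let $L_I:\Sigma^\omega\to\mathbb R$ be defined by $L_I(w)=1$ if $w$ contains infinitely many $a$'s and $L_I(w)=0$ otherwise. Then: (1) $L_I$ is not the language of any automaton in NLimAvg; (2) $L_I$ is not the language of any automaton in PosLimAvg; (3) $L_I$ is the language of some automaton in AsLimAvg.
   Context: A probabilistic weighted automaton over a finite alphabet $\Sigma$ is a tuple $A=(Q,\rho_I,\Sigma,\delta,\gamma)$ where $Q$ is a finite set of states, $\rho_I$ is a probability distribution on $Q$, $\delta:Q\times\Sigma\to\mathcal D(Q)$ assigns to each state and letter a probability distribution on $Q$, and $\gamma:Q\times\Sigma\times Q\to\mathbb Q$ is a weight function. A run over an infinite word $w=\sigma_1\sigma_2\dots$ is a sequence $r=q_0\sigma_1q_1\sigma_2\dots$ with $\rho_I(q_0)>0$ and $\delta(q_i,\sigma_{i+1})(q_{i+1})>0$ for all $i$; its weight sequence is $\gamma(r)=v_0v_1\dots$ with $v_i=\gamma(q_i,\sigma_{i+1},q_{i+1})$. For each $w$, the probabilities of finite run prefixes induce a probability measure $\mathbb P^A$ on runs over $w$. With $\mathsf{LimAvg}(v)=\liminf_{n}\frac1n\sum_{i=0}^{n-1}v_i$: PosLimAvg automata define $L^{>0}_A(w)=\sup\{\eta\mid \mathbb P^A(\{r:\mathsf{LimAvg}(\gamma(r))\ge\eta\})>0\}$; AsLimAvg automata define $L^{=1}_A(w)=\sup\{\eta\mid \mathbb P^A(\{r:\mathsf{LimAvg}(\gamma(r))\ge\eta\})=1\}$; NLimAvg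 automata (non-probabilistic: initial states with $\rho_I(q)>0$, transitions with $\delta(q,\sigma)(q')>0$) define $L^{\max}_A(w)=\sup\{\mathsf{LimAvg}(\gamma(r))\mid r\text{ run over }w\}$. *)

theory Defs
  imports "HOL-Probability.Probability"
begin

text \<open>The alphabet Sigma = {a, b}; infinite words are functions nat => sigma
  (letter sigma_{i+1} of the paper is w i).\<close>
datatype sigma = a | b

type_synonym word = "nat \<Rightarrow> sigma"

record pwa =
  pwa_states :: "nat set"
  pwa_init   :: "nat pmf"
  pwa_trans  :: "nat \<Rightarrow> sigma \<Rightarrow> nat pmf"
  pwa_weight :: "nat \<Rightarrow> sigma \<Rightarrow> nat \<Rightarrow> rat"

definition wf_pwa :: "pwa \<Rightarrow> bool" where
  "wf_pwa A \<longleftrightarrow> finite (pwa_states A) \<and> set_pmf (pwa_init A) \<subseteq> pwa_states A \<and>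
     (\<forall>q\<in>pwa_states A. \<forall>s. set_pmf (pwa_trans A q s) \<subseteq> pwa_states A)"

definition is_run :: "pwa \<Rightarrow> word \<Rightarrow> (nat \<Rightarrow> nat) \<Rightarrow> bool" where
  "is_run A w r \<longleftrightarrow> pmf (pwa_init A) (r 0) > 0 \<and>
     (\<forall>i. pmf (pwa_trans A (r i) (w i)) (r (Suc i)) > 0)"

definition weight_seq :: "pwa \<Rightarrow> word \<Rightarrow> (nat \<Rightarrow> nat) \<Rightarrow> nat \<Rightarrow> real" where
  "weight_seq A w r i = real_of_rat (pwa_weight A (r i) (w i) (r (Suc i)))"

definition LimAvg :: "(nat \<Rightarrow> real) \<Rightarrow> ereal" where
  "LimAvg v = liminf (\<lambda>n. ereal ((\<Sum>i<n. v i) / real n))"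

definition run_measure_spec :: "pwa \<Rightarrow> word \<Rightarrow> (nat \<Rightarrow> nat) measure \<Rightarrow> bool" where
  "run_measure_spec A w M \<longleftrightarrow> prob_space M \<and>
     sets M = sets (PiM (UNIV :: nat set) (\<lambda>_. count_space (UNIV :: nat set))) \<and>
     (\<forall>n (q :: nat \<Rightarrow> nat). emeasure M {r. \<forall>i\<le>n. r i = q i} =
        ennreal (pmf (pwa_init A) (q 0) *
                 (\<Prod>i<n. pmf (pwa_trans A (q i) (w i)) (q (Suc i)))))"

definition run_measure :: "pwa \<Rightarrow> word \<Rightarrow> (nat \<Rightarrow> nat) measure" where
  "run_measure A w = (THE M. run_measure_spec A w M)"

definition runs_ge :: "pwa \<Rightarrow> word \<Rightarrow> real \<Rightarrow> (nat \<Rightarrow> nat) set" where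
  "runs_ge A w \<eta> = {r. is_run A w r \<and> LimAvg (weight_seq A w r) \<ge> ereal \<eta>}"

definition L_pos :: "pwa \<Rightarrow> word \<Rightarrow> ereal" where
  "L_pos A w = Sup (ereal ` {\<eta>. measure (run_measure A w) (runs_ge A w \<eta>) > 0})"

definition L_as :: "pwa \<Rightarrow> word \<Rightarrow> ereal" where
  "L_as A w = Sup (ereal ` {\<eta>. measure (run_measure A w) (runs_ge A w \<eta>) = 1})"

definition L_max :: "pwa \<Rightarrow> word \<Rightarrow> ereal" where
  "L_max A w = Sup {LimAvg (weight_seq A w r) | r. is_run A w r}"

definition L_I :: "word \<Rightarrow> real" where
  "L_I w = (if infinite {i. w i = a} then 1 else 0)"

end

theory Submission
  imports Defs
begin


abbreviation PS where "PS \<equiv> PiM (UNIV::nat set) (\<lambda>_. count_space (UNIV::nat set))"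

lemma space_PS: "space PS = UNIV"
  by (simp add: space_PiM)

lemma cyl_sets: "{r::nat\<Rightarrow>nat. \<forall>i\<le>n. r i = c i} \<in> sets PS"
proof -
  have "{r::nat\<Rightarrow>nat. \<forall>i\<le>n. r i = c i} = (\<Inter>i\<in>{..n}. {r\<in>space PS. r i \<in> {c i}})"
    by (auto simp: space_PS)
  also have "\<dots> \<in> sets PS"
    by (intro sets.finite_INT) (auto intro!: sets_Collect_single)
  finally show ?thesis .
qed

definition proj :: "nat \<Rightarrow> (nat \<Rightarrow> nat) \<Rightarrow> nat list" where
  "proj n r = map r [0..<Suc n]"

lemma proj_eq: "proj n r = proj n r' \<longleftrightarrow> (\<forall>i\<le>n. r i = r' i)"
  unfolding proj_def by (auto simp: map_eq_conv less_Suc_eq_le)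

lemma proj_eq_l: "proj n r = l \<longleftrightarrow> length l = Suc n \<and> (\<forall>i\<le>n. r i = l ! i)"
  unfolding proj_def list_eq_iff_nth_eq
  by (auto simp del: upt_Suc simp: less_Suc_eq_le nth_map_upt)

lemma proj_vimage: "proj n -` {l} = (if length l = Suc n then {r. \<forall>i\<le>n. r i = l ! i} else {})"
  using proj_eq_l by auto

lemma proj_meas: "sets M = sets PS \<Longrightarrow> proj n \<in> measurable M (count_space UNIV)"
  apply (subst measurable_count_space_eq2_countable)
  apply (simp add: sets_eq_imp_space_eq[of M PS] space_PS proj_vimage cyl_sets)
  done

definition cylv :: "pwa \<Rightarrow> word \<Rightarrow> nat \<Rightarrow> (nat \<Rightarrow> nat) \<Rightarrow> real" where
  "cylv A w n q = pmf (pwa_init A) (q 0) * (\<Prod>i<n. pmf (pwa_trans A (q i) (w i)) (q (Suc i)))"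

lemma spec_space: "run_measure_spec A w M \<Longrightarrow> space M = UNIV"
  unfolding run_measure_spec_def using sets_eq_imp_space_eq space_PS by metis

lemma distr_single:
  assumes "run_measure_spec A w M"
  shows "emeasure (distr M (count_space UNIV) (proj n)) {l} =
     (if length l = Suc n then ennreal (cylv A w n (\<lambda>i. l ! i)) else 0)"
proof -
  have s: "sets M = sets PS" using assms unfolding run_measure_spec_def by auto
  have c: "emeasure M {r. \<forall>i\<le>n. r i = (\<lambda>i. l ! i) i} = ennreal (cylv A w n (\<lambda>i. l ! i))"
    using assms unfolding run_measure_spec_def cylv_def by blast
  show ?thesis
    using c
    by (simp add: emeasure_distr proj_meas[OF s] spec_space[OF assms] proj_vimage)
qed

lemma distr_eq:
  assumes "run_measure_spec A w M" "run_measure_spec A w' M'" "\<forall>i<n. w i = w' i"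
  shows "distr M (count_space UNIV) (proj n) = distr M' (count_space UNIV) (proj n)"
  by (rule measure_eqI_countable[where A=UNIV])
     (auto simp: distr_single[OF assms(1)] distr_single[OF assms(2)] assms(3) cylv_def)

definition detm :: "nat \<Rightarrow> (nat \<Rightarrow> nat) set \<Rightarrow> bool" where
  "detm n S \<longleftrightarrow> (\<forall>r r'. (\<forall>i\<le>n. r i = r' i) \<longrightarrow> (r \<in> S \<longleftrightarrow> r' \<in> S))"

lemma detm_vimage: "detm n S \<Longrightarrow> S = proj n -` (proj n ` S)"
  unfolding detm_def proj_eq[symmetric] by blast

lemma detm_sets: "sets M = sets PS \<Longrightarrow> detm n S \<Longrightarrow> S \<in> sets M"
  apply (subst detm_vimage, assumption)
  using measurable_sets[OF proj_meas, of M "proj n ` S" n] sets_eq_imp_space_eq[of M PS] space_PS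
  by (metis inf_top.right_neutral sets_count_space UNIV_I Pow_UNIV)

lemma detm_emeasure:
  assumes "run_measure_spec A w M" "detm n S"
  shows "emeasure M S = emeasure (distr M (count_space UNIV) (proj n)) (proj n ` S)"
proof -
  have s: "sets M = sets PS" using assms unfolding run_measure_spec_def by auto
  show ?thesis
    apply (subst emeasure_distr[OF proj_meas[OF s]])
    using detm_vimage[OF assms(2)] spec_space[OF assms(1)] by auto
qed

lemma detm_emeasure_eq:
  assumes "run_measure_spec A w M" "run_measure_spec A w' M'" "\<forall>i<n. w i = w' i" "detm n S"
  shows "emeasure M S = emeasure M' S"
  using detm_emeasure[OF assms(1,4)] detm_emeasure[OF assms(2,4)] distr_eq[OF assms(1-3)] by simp

lemma spec_unique:
  assumes M: "run_measure_spec A w M" and M': "run_measure_spec A w M'"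
  shows "M = M'"
proof (rule measure_eqI_PiM_infinite[where I=UNIV and M="\<lambda>_. count_space UNIV"])
  show "sets M = sets PS" "sets M' = sets PS" using M M' unfolding run_measure_spec_def by auto
  show "finite_measure M" using M unfolding run_measure_spec_def
    by (auto intro: prob_space.finite_measure)
  fix X :: "nat \<Rightarrow> nat set" and J assume J: "finite (J::nat set)" "J \<subseteq> UNIV"
  let ?n = "Max (insert 0 J)"
  have pe: "prod_emb UNIV (\<lambda>_. count_space UNIV) J (Pi\<^sub>E J X) = {r. \<forall>i\<in>J. r i \<in> X i}"
    by (auto simp: prod_emb_def space_PS PiE_iff)
  have "detm ?n {r. \<forall>i\<in>J. r i \<in> X i}"
    unfolding detm_def
  proof (intro allI impI)
    fix r r' :: "nat \<Rightarrow> nat" assume h: "\<forall>i\<le>?n. r i = r' i"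
    have eq: "\<forall>i\<in>J. r i = r' i"
      using h J Max_ge[of "insert 0 J"] by auto
    then show "(r \<in> {r. \<forall>i\<in>J. r i \<in> X i}) = (r' \<in> {r. \<forall>i\<in>J. r i \<in> X i})"
      by auto
  qed
  then have dd: "detm ?n (prod_emb UNIV (\<lambda>_. count_space UNIV) J (Pi\<^sub>E J X))" by (simp add: pe)
  show "emeasure M (prod_emb UNIV (\<lambda>_. count_space UNIV) J (Pi\<^sub>E J X)) =
        emeasure M' (prod_emb UNIV (\<lambda>_. count_space UNIV) J (Pi\<^sub>E J X))"
    by (intro detm_emeasure_eq[OF M M' _ dd]) auto
qed

primrec chain :: "((nat \<times> nat) option \<Rightarrow> nat) \<Rightarrow> nat \<Rightarrow> nat" where
  "chain \<omega> 0 = \<omega> None"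
| "chain \<omega> (Suc i) = \<omega> (Some (i, chain \<omega> i))"

definition Mi :: "pwa \<Rightarrow> word \<Rightarrow> (nat \<times> nat) option \<Rightarrow> nat measure" where
  "Mi A w j = measure_pmf (case j of None \<Rightarrow> pwa_init A | Some (i, q) \<Rightarrow> pwa_trans A q (w i))"

lemma sets_Mi: "sets (Mi A w j) = sets (count_space UNIV)"
  by (simp add: Mi_def)

lemma space_Mi: "space (Mi A w j) = UNIV"
  by (simp add: Mi_def)

lemma chain_cyl:
  "(\<forall>i\<le>n. chain \<omega> i = q i) \<longleftrightarrow> (\<omega> None = q 0 \<and> (\<forall>i<n. \<omega> (Some (i, q i)) = q (Suc i)))"
proof (induction n)
  case 0 then show ?case by simp
next
  case (Suc n)
  have "(\<forall>i\<le>Suc n. chain \<omega> i = q i) \<longleftrightarrow> (\<forall>i\<le>n. chain \<omega> i = q i) \<and> chain \<omega> (Suc n) = q (Suc n)"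
    by (auto simp: le_Suc_eq)
  also have "\<dots> \<longleftrightarrow> (\<omega> None = q 0 \<and> (\<forall>i<n. \<omega> (Some (i, q i)) = q (Suc i))) \<and> \<omega> (Some (n, q n)) = q (Suc n)"
    using Suc by auto
  also have "\<dots> \<longleftrightarrow> (\<omega> None = q 0 \<and> (\<forall>i<Suc n. \<omega> (Some (i, q i)) = q (Suc i)))"
    by (auto simp: less_Suc_eq)
  finally show ?case .
qed

lemma chain_meas: "(\<lambda>\<omega>. chain \<omega> i) \<in> measurable (PiM UNIV (Mi A w)) (count_space UNIV)"
proof (induction i)
  case 0
  show ?case
    using measurable_component_singleton[of None UNIV "Mi A w"]
      measurable_cong_sets[OF refl sets_Mi, of "PiM UNIV (Mi A w)" A w None]
    by simp
next
  case (Suc i)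
  have "(\<lambda>\<omega>. (\<lambda>q \<omega>. \<omega> (Some (i, q))) (chain \<omega> i) \<omega>) \<in> measurable (PiM UNIV (Mi A w)) (count_space UNIV)"
  proof (rule measurable_compose_countable[OF _ Suc])
    fix q
    show "(\<lambda>\<omega>. \<omega> (Some (i, q))) \<in> measurable (PiM UNIV (Mi A w)) (count_space UNIV)"
      using measurable_component_singleton[of "Some (i, q)" UNIV "Mi A w"]
        measurable_cong_sets[OF refl sets_Mi, of "PiM UNIV (Mi A w)" A w "Some (i,q)"]
      by simp
  qed
  then show ?case by simp
qed

lemma spec_exists: "\<exists>M. run_measure_spec A w M"
proof -
  let ?\<Omega> = "PiM UNIV (Mi A w)"
  let ?\<Phi> = "\<lambda>\<omega> i. chain \<omega> i"
  have spO: "space ?\<Omega> = UNIV" by (simp add: space_PiM space_Mi)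
  have meas: "?\<Phi> \<in> measurable ?\<Omega> PS"
    by (rule measurable_PiM_single') (auto simp: chain_meas space_PiM)
  have pO: "prob_space ?\<Omega>"
    by (rule prob_space_PiM) (simp add: Mi_def prob_space_measure_pmf)
  let ?M = "distr ?\<Omega> PS ?\<Phi>"
  have "run_measure_spec A w ?M"
    unfolding run_measure_spec_def
  proof (intro conjI allI)
    show "prob_space ?M" using pO meas by (rule prob_space.prob_space_distr)
    show "sets ?M = sets PS" by simp
    fix n and q :: "nat \<Rightarrow> nat"
    define J where "J = insert None ((\<lambda>i. Some (i, q i)) ` {..<n})"
    define X where "X j = (case j of None \<Rightarrow> {q 0} | Some (i, _) \<Rightarrow> {q (Suc i)})" for j :: "(nat\<times>nat) option"
    have pre: "{\<omega>. \<forall>i\<le>n. chain \<omega> i = q i} \<inter> space ?\<Omega> = prod_emb UNIV (Mi A w) J (Pi\<^sub>E J X)"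
      by (auto simp: spO prod_emb_def PiE_iff chain_cyl J_def X_def space_PiM space_Mi)
    have finJ: "finite J" by (simp add: J_def)
    have "emeasure ?M {r. \<forall>i\<le>n. r i = q i} = emeasure ?\<Omega> (prod_emb UNIV (Mi A w) J (Pi\<^sub>E J X))"
      by (simp add: emeasure_distr[OF meas cyl_sets] pre)
    also have "\<dots> = (\<Prod>j\<in>J. emeasure (Mi A w j) (X j))"
      by (rule emeasure_PiM_emb) (auto simp: Mi_def prob_space_measure_pmf finJ)
    also have "\<dots> = emeasure (Mi A w None) (X None) * (\<Prod>j\<in>(\<lambda>i. Some (i, q i)) ` {..<n}. emeasure (Mi A w j) (X j))"
      unfolding J_def by (subst prod.insert) auto
    also have "\<dots> = ennreal (pmf (pwa_init A) (q 0)) * (\<Prod>i<n. ennreal (pmf (pwa_trans A (q i) (w i)) (q (Suc i))))"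
      by (subst prod.reindex) (auto simp: inj_on_def X_def Mi_def emeasure_pmf_single)
    also have "\<dots> = ennreal (pmf (pwa_init A) (q 0) * (\<Prod>i<n. pmf (pwa_trans A (q i) (w i)) (q (Suc i))))"
      by (simp add: prod_ennreal ennreal_mult' prod_nonneg)
    finally show "emeasure ?M {r. \<forall>i\<le>n. r i = q i} = ennreal (pmf (pwa_init A) (q 0) * (\<Prod>i<n. pmf (pwa_trans A (q i) (w i)) (q (Suc i))))" .
  qed
  then show ?thesis by blast
qed

lemma spec_rm: "run_measure_spec A w (run_measure A w)"
  unfolding run_measure_def
  using spec_exists spec_unique by (metis theI)

lemma rm_prob: "prob_space (run_measure A w)"
  using spec_rm unfolding run_measure_spec_def by blast

lemma rm_sets: "sets (run_measure A w) = sets PS"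
  using spec_rm unfolding run_measure_spec_def by blast

lemma rm_space: "space (run_measure A w) = UNIV"
  using spec_rm by (rule spec_space)

lemma detf_meas:
  assumes s: "sets M = sets PS"
    and d: "\<forall>r r'. (\<forall>i\<le>n. r i = r' i) \<longrightarrow> F r = F r'"
    and sp: "\<forall>r. F r \<in> space N"
  shows "F \<in> measurable M N"
proof -
  define ext where "ext l = (\<lambda>i. if i < length l then l ! i else (0::nat))" for l :: "nat list"
  have "\<forall>i\<le>n. ext (proj n r) i = r i" for r
    by (auto simp: ext_def proj_def nth_map_upt simp del: upt_Suc)
  then have eq: "F = (\<lambda>l. F (ext l)) \<circ> proj n"
    using d by (auto simp: fun_eq_iff)
  have "(\<lambda>l. F (ext l)) \<in> measurable (count_space UNIV) N"
    using sp by (simp add: measurable_count_space_eq1)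
  then show ?thesis
    by (subst eq) (rule measurable_comp[OF proj_meas[OF s]])
qed

lemma cylv_cong: "(\<forall>i\<le>n. q i = q' i) \<Longrightarrow> cylv A w n q = cylv A w n q'"
  unfolding cylv_def by (auto intro!: prod.cong)

lemma null_detm:
  assumes M: "run_measure_spec A w M" and d: "detm n S" and z: "\<forall>r\<in>S. cylv A w n r = 0"
  shows "emeasure M S = 0"
proof -
  let ?D = "distr M (count_space UNIV) (proj n)"
  have "(\<Union>l\<in>proj n ` S. {l}) \<in> null_sets ?D"
  proof (rule null_sets_UN')
    show "countable (proj n ` S)" by (rule countableI_type)
    fix l assume "l \<in> proj n ` S"
    then obtain r where r: "r \<in> S" "l = proj n r" by auto
    have "length l = Suc n" "\<forall>i\<le>n. r i = l ! i" using r proj_eq_l by auto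
    then have "emeasure ?D {l} = 0"
      using distr_single[OF M, of n l] z r(1) cylv_cong[of n r "\<lambda>i. l ! i" A w] by simp
    then show "{l} \<in> null_sets ?D" by auto
  qed
  then show ?thesis using detm_emeasure[OF M d] by auto
qed

definition runset :: "pwa \<Rightarrow> word \<Rightarrow> (nat \<Rightarrow> nat) set" where
  "runset A w = {r. is_run A w r}"

lemma runset_sets: "sets M = sets PS \<Longrightarrow> runset A w \<in> sets M"
proof -
  assume s: "sets M = sets PS"
  have "runset A w = {r. pmf (pwa_init A) (r 0) > 0} \<inter> (\<Inter>i. {r. pmf (pwa_trans A (r i) (w i)) (r (Suc i)) > 0})"
    by (auto simp: runset_def is_run_def)
  also have "\<dots> \<in> sets M"
  proof (intro sets.Int)
    show "{r. pmf (pwa_init A) (r 0) > 0} \<in> sets M"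
      by (rule detm_sets[OF s, of 0]) (auto simp: detm_def)
    have h: "{r. pmf (pwa_trans A (r i) (w i)) (r (Suc i)) > 0} \<in> sets M" for i
      by (rule detm_sets[OF s, of "Suc i"]) (auto simp: detm_def)
    show "(\<Inter>i. {r. pmf (pwa_trans A (r i) (w i)) (r (Suc i)) > 0}) \<in> sets M"
      using h by (intro sets.countable_INT) auto
  qed
  finally show ?thesis .
qed

lemma runset_null:
  assumes M: "run_measure_spec A w M"
  shows "emeasure M (UNIV - runset A w) = 0"
proof -
  have eq: "UNIV - runset A w = {r. pmf (pwa_init A) (r 0) = 0} \<union> (\<Union>i. {r. pmf (pwa_trans A (r i) (w i)) (r (Suc i)) = 0})"
    by (auto simp: runset_def is_run_def order_less_le)
  have "{r. pmf (pwa_init A) (r 0) = 0} \<in> null_sets M"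
  proof -
    have "emeasure M {r. pmf (pwa_init A) (r 0) = 0} = 0"
      by (rule null_detm[OF M, of 0]) (auto simp: detm_def cylv_def)
    moreover have "{r. pmf (pwa_init A) (r 0) = 0} \<in> sets M"
      using M unfolding run_measure_spec_def by (intro detm_sets[of _ 0]) (auto simp: detm_def)
    ultimately show ?thesis by auto
  qed
  moreover have "(\<Union>i. {r. pmf (pwa_trans A (r i) (w i)) (r (Suc i)) = 0}) \<in> null_sets M"
  proof (rule null_sets_UN)
    fix i
    have "emeasure M {r. pmf (pwa_trans A (r i) (w i)) (r (Suc i)) = 0} = 0"
      by (rule null_detm[OF M, of "Suc i"]) (auto simp: detm_def cylv_def)
    moreover have "{r. pmf (pwa_trans A (r i) (w i)) (r (Suc i)) = 0} \<in> sets M"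
      using M unfolding run_measure_spec_def by (intro detm_sets[of _ "Suc i"]) (auto simp: detm_def)
    ultimately show "{r. pmf (pwa_trans A (r i) (w i)) (r (Suc i)) = 0} \<in> null_sets M" by auto
  qed
  ultimately have "UNIV - runset A w \<in> null_sets M" unfolding eq by (rule null_sets.Un)
  then show ?thesis by auto
qed

lemma runset_prob: "measure (run_measure A w) (runset A w) = 1"
proof -
  interpret prob_space "run_measure A w" by (rule rm_prob)
  have "measure (run_measure A w) (UNIV - runset A w) = 0"
    using runset_null[OF spec_rm] by (simp add: measure_def)
  then show ?thesis
    using prob_compl[OF runset_sets[OF rm_sets]] by (simp add: rm_space)
qed

definition avg :: "pwa \<Rightarrow> word \<Rightarrow> (nat \<Rightarrow> nat) \<Rightarrow> nat \<Rightarrow> real" where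
  "avg A w r n = (\<Sum>i<n. weight_seq A w r i) / real n"

lemma LimAvg_avg: "LimAvg (weight_seq A w r) = liminf (\<lambda>n. ereal (avg A w r n))"
  unfolding LimAvg_def avg_def ..

lemma avg_det: "(\<forall>i\<le>n. r i = r' i) \<Longrightarrow> avg A w r n = avg A w r' n"
  unfolding avg_def weight_seq_def by (auto intro!: sum.cong)

lemma avg_meas: "sets M = sets PS \<Longrightarrow> (\<lambda>r. ereal (avg A w r n)) \<in> borel_measurable M"
  by (rule detf_meas[of _ n]) (auto dest: avg_det)

lemma LimAvg_meas: "sets M = sets PS \<Longrightarrow> (\<lambda>r. LimAvg (weight_seq A w r)) \<in> borel_measurable M"
  unfolding LimAvg_avg by (intro borel_measurable_liminf avg_meas)

lemma runs_ge_sets: "sets M = sets PS \<Longrightarrow> runs_ge A w \<eta> \<in> sets M"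
proof -
  assume s: "sets M = sets PS"
  have sp: "space M = UNIV" using s sets_eq_imp_space_eq space_PS by metis
  have "{r \<in> space M. ereal \<eta> \<le> LimAvg (weight_seq A w r)} \<in> sets M"
    using LimAvg_meas[OF s] by measurable
  then have "runset A w \<inter> {r \<in> space M. ereal \<eta> \<le> LimAvg (weight_seq A w r)} \<in> sets M"
    using runset_sets[OF s] by auto
  moreover have "runs_ge A w \<eta> = runset A w \<inter> {r \<in> space M. ereal \<eta> \<le> LimAvg (weight_seq A w r)}"
    by (auto simp: runs_ge_def runset_def sp)
  ultimately show ?thesis by simp
qed




definition Dset :: "pwa \<Rightarrow> word \<Rightarrow> nat \<Rightarrow> nat \<Rightarrow> (nat \<Rightarrow> nat) set" where
  "Dset A w N H = {r. \<exists>T. N \<le> T \<and> T \<le> H \<and> avg A w r T < 1/4}"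

lemma Dset_detm: "detm H (Dset A w N H)"
  unfolding detm_def Dset_def
proof (intro allI impI)
  fix r r' :: "nat \<Rightarrow> nat" assume h: "\<forall>i\<le>H. r i = r' i"
  have "T \<le> H \<Longrightarrow> avg A w r T = avg A w r' T" for T
    using h by (intro avg_det) auto
  then show "(r \<in> {r. \<exists>T\<ge>N. T \<le> H \<and> avg A w r T < 1 / 4}) = (r' \<in> {r. \<exists>T\<ge>N. T \<le> H \<and> avg A w r T < 1 / 4})"
    by auto
qed

lemma avg_word: "(\<forall>i<T. w i = w' i) \<Longrightarrow> avg A w r T = avg A w' r T"
  unfolding avg_def weight_seq_def by (auto intro!: sum.cong)

lemma Dset_word:
  assumes h: "\<forall>i<H. w i = w' i" shows "Dset A w N H = Dset A w' N H"
proof -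
  have e: "T \<le> H \<Longrightarrow> avg A w r T = avg A w' r T" for r T using h by (intro avg_word) auto
  show ?thesis unfolding Dset_def
  proof (intro Collect_cong iffI)
    fix r assume "\<exists>T. N \<le> T \<and> T \<le> H \<and> avg A w r T < 1/4"
    then obtain T where "N \<le> T" "T \<le> H" "avg A w r T < 1/4" by blast
    then show "\<exists>T. N \<le> T \<and> T \<le> H \<and> avg A w' r T < 1/4" using e[of T r] by auto
  next
    fix r assume "\<exists>T. N \<le> T \<and> T \<le> H \<and> avg A w' r T < 1/4"
    then obtain T where "N \<le> T" "T \<le> H" "avg A w' r T < 1/4" by blast
    then show "\<exists>T. N \<le> T \<and> T \<le> H \<and> avg A w r T < 1/4" using e[of T r] by auto
  qed
qed

lemma Lpos_zero_null:
  assumes "L_pos A v = 0" "\<eta> > 0"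
  shows "measure (run_measure A v) (runs_ge A v \<eta>) = 0"
proof (rule ccontr)
  assume "measure (run_measure A v) (runs_ge A v \<eta>) \<noteq> 0"
  then have "measure (run_measure A v) (runs_ge A v \<eta>) > 0" using measure_nonneg order_le_less by metis
  then have "ereal \<eta> \<le> L_pos A v" unfolding L_pos_def by (auto intro: Sup_upper)
  then show False using assms by simp
qed

lemma finite_case:
  assumes L0: "L_pos A v = 0" and e: "\<epsilon> > 0"
  shows "\<exists>H\<ge>N. measure (run_measure A v) (Dset A v N H) \<ge> 1 - \<epsilon>"
proof -
  let ?M = "run_measure A v"
  interpret prob_space ?M by (rule rm_prob)
  have Ds: "Dset A v N H \<in> sets ?M" for H by (rule detm_sets[OF rm_sets Dset_detm])
  have inc: "incseq (Dset A v N)"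
    by (auto simp: incseq_def Dset_def)
  define G where "G = UNIV - (\<Union>H. Dset A v N H)"
  have UD: "(\<Union>H. Dset A v N H) \<in> sets ?M" using Ds by (intro sets.countable_nat_UN) blast
  have "runset A v \<inter> G \<subseteq> runs_ge A v (1/4)"
  proof
    fix r assume r: "r \<in> runset A v \<inter> G"
    then have "\<forall>T\<ge>N. avg A v r T \<ge> 1/4"
      unfolding G_def Dset_def by (auto simp: not_less)
    then have "eventually (\<lambda>T. ereal (1/4) \<le> ereal (avg A v r T)) sequentially"
      by (auto simp: eventually_sequentially)
    then have "ereal (1/4) \<le> LimAvg (weight_seq A v r)"
      unfolding LimAvg_avg by (rule Liminf_bounded)
    then show "r \<in> runs_ge A v (1/4)" using r by (auto simp: runs_ge_def runset_def)
  qed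
  then have Gsub: "G \<subseteq> (UNIV - runset A v) \<union> runs_ge A v (1/4)" by auto
  have s1: "runset A v \<in> sets ?M" by (rule runset_sets[OF rm_sets])
  have s2: "runs_ge A v (1/4) \<in> sets ?M" by (rule runs_ge_sets[OF rm_sets])
  have s1': "UNIV - runset A v \<in> sets ?M" using sets.compl_sets[OF s1] by (simp add: rm_space)
  moreover have "(UNIV - runset A v) \<union> runs_ge A v (1/4) \<in> sets ?M"
    using sets.Un[OF s1' s2] .
  ultimately have "measure ?M G \<le> measure ?M ((UNIV - runset A v) \<union> runs_ge A v (1/4))"
    using Gsub by (intro finite_measure_mono) auto
  also have "\<dots> \<le> measure ?M (UNIV - runset A v) + measure ?M (runs_ge A v (1/4))"
    using s1' s2 by (rule measure_Un_le)
  also have "measure ?M (UNIV - runset A v) = 0"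
    using runset_null[OF spec_rm] by (simp add: measure_def)
  also have "measure ?M (runs_ge A v (1/4)) = 0"
    by (rule Lpos_zero_null[OF L0]) simp
  finally have "measure ?M G \<le> 0" by simp
  moreover have "measure ?M G = 1 - measure ?M (\<Union>H. Dset A v N H)"
    using prob_compl[OF UD] by (simp add: G_def rm_space)
  ultimately have "measure ?M (\<Union>H. Dset A v N H) = 1"
    using prob_le_1[of "\<Union>H. Dset A v N H"] by linarith
  moreover have "(\<lambda>H. measure ?M (Dset A v N H)) \<longlonglongrightarrow> measure ?M (\<Union>H. Dset A v N H)"
    using Ds inc by (intro finite_Lim_measure_incseq) blast+
  ultimately have "(\<lambda>H. measure ?M (Dset A v N H)) \<longlonglongrightarrow> 1" by simp
  then have "eventually (\<lambda>H. measure ?M (Dset A v N H) > 1 - \<epsilon>) sequentially"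
    using e by (intro order_tendstoD) auto
  then obtain H0 where H0: "\<forall>H\<ge>H0. measure ?M (Dset A v N H) > 1 - \<epsilon>"
    by (auto simp: eventually_sequentially)
  have "1 - \<epsilon> \<le> measure ?M (Dset A v N (max N H0))"
    using H0[rule_format, of "max N H0"] by simp
  then show ?thesis by (intro exI[of _ "max N H0"] conjI) simp_all
qed

lemma small_le:
  fixes x :: real
  assumes "\<forall>k\<ge>K. x \<le> 1 / (real k + 1)"
  shows "x \<le> 0"
proof (rule ccontr)
  assume "\<not> x \<le> 0"
  then have x: "x > 0" by simp
  obtain n :: nat where n: "1 / x < real n" using reals_Archimedean2 by blast
  have "x \<le> 1 / (real (max K n) + 1)" using assms by simp
  also have "\<dots> \<le> 1 / (real n + 1)" by (intro divide_left_mono) auto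
  finally have "x * (real n + 1) \<le> 1" by (simp add: field_simps)
  moreover have "1 < x * real n" using n x by (simp add: field_simps)
  ultimately show False using x by (simp add: algebra_simps)
qed

primrec seqG :: "(nat \<Rightarrow> nat set \<Rightarrow> nat) \<Rightarrow> nat \<Rightarrow> nat set" where
  "seqG Hs 0 = {0}"
| "seqG Hs (Suc k) = insert (Hs k (seqG Hs k) + 1) (seqG Hs k)"

lemma seqG_fin: "finite (seqG Hs k) \<and> seqG Hs k \<noteq> {}"
  by (induction k) auto

lemma seqG_props:
  fixes Hs :: "nat \<Rightarrow> nat set \<Rightarrow> nat"
  assumes H: "\<And>k. Hs k (seqG Hs k) \<ge> Max (seqG Hs k) + 1"
  shows "Max (seqG Hs (Suc k)) = Hs k (seqG Hs k) + 1"
    and "k \<le> Max (seqG Hs k)"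
    and "Hs k (seqG Hs k) < Hs (Suc k) (seqG Hs (Suc k))"
    and "seqG Hs k \<subseteq> seqG Hs (k + j)"
    and "\<forall>x\<in>seqG Hs (k + j). x \<in> seqG Hs k \<or> x > Hs k (seqG Hs k)"
proof -
  have M: "Max (seqG Hs (Suc k)) = Hs k (seqG Hs k) + 1" for k
    using H[of k] seqG_fin[of Hs k] by (auto simp: max_def)
  then show "Max (seqG Hs (Suc k)) = Hs k (seqG Hs k) + 1" .
  show "k \<le> Max (seqG Hs k)"
  proof (induction k)
    case (Suc k) then show ?case using M[of k] H[of k] by simp
  qed simp
  have lt: "Hs k (seqG Hs k) < Hs (Suc k) (seqG Hs (Suc k))" for k
    using M[of k] H[of "Suc k"] by simp
  then show "Hs k (seqG Hs k) < Hs (Suc k) (seqG Hs (Suc k))" .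
  have mono: "Hs k (seqG Hs k) \<le> Hs (k + j) (seqG Hs (k + j))" for j
    using lift_Suc_mono_le[of "\<lambda>k. Hs k (seqG Hs k)" k "k + j"] lt by (simp add: less_imp_le)
  show "seqG Hs k \<subseteq> seqG Hs (k + j)"
    by (induction j) auto
  show "\<forall>x\<in>seqG Hs (k + j). x \<in> seqG Hs k \<or> x > Hs k (seqG Hs k)"
  proof (induction j)
    case (Suc j)
    have "Hs (k + j) (seqG Hs (k + j)) + 1 > Hs k (seqG Hs k)" using mono[of j] by simp
    then show ?case using Suc by simp
  qed simp
qed

definition wS :: "nat set \<Rightarrow> word" where
  "wS S = (\<lambda>i. if i \<in> S then a else b)"

lemma L_I_wS: "finite S \<Longrightarrow> L_I (wS S) = 0"
proof -
  assume "finite S"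
  moreover have "{i. wS S i = a} = S" by (auto simp: wS_def)
  ultimately show ?thesis by (simp add: L_I_def)
qed

lemma part2: "\<not> (\<exists>A. wf_pwa A \<and> (\<forall>w. L_pos A w = ereal (L_I w)))"
proof
  assume "\<exists>A. wf_pwa A \<and> (\<forall>w. L_pos A w = ereal (L_I w))"
  then obtain A where LA: "\<forall>w. L_pos A w = ereal (L_I w)" by blast
  define P where "P k S H \<longleftrightarrow> H \<ge> Max S + 1 \<and>
      measure (run_measure A (wS S)) (Dset A (wS S) (Max S + 1) H) \<ge> 1 - 1 / (real k + 1)" for k S H
  define Hs where "Hs k S = (SOME H. P k S H)" for k S
  have HsP: "finite S \<Longrightarrow> P k S (Hs k S)" for k S
  proof -
    assume "finite S"
    then have "L_pos A (wS S) = 0" using LA L_I_wS by simp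
    then have "\<exists>H. P k S H" unfolding P_def
      using finite_case[of A "wS S" "1 / (real k + 1)" "Max S + 1"] by auto
    then show ?thesis unfolding Hs_def by (rule someI_ex)
  qed
  define S where "S k = seqG Hs k" for k
  define H where "H k = Hs k (S k)" for k
  have PS: "P k (S k) (H k)" for k unfolding H_def S_def using HsP seqG_fin by blast
  have Hge: "\<And>k. Hs k (seqG Hs k) \<ge> Max (seqG Hs k) + 1"
    using PS unfolding P_def S_def H_def by blast
  note props = seqG_props[OF Hge]
  define w where "w i = (if \<exists>k. i \<in> S k then a else b)" for i
  have agree: "\<forall>i<H k. w i = wS (S k) i" for k
  proof (intro allI impI)
    fix i assume i: "i < H k"
    have "(\<exists>j. i \<in> S j) \<longleftrightarrow> i \<in> S k"
    proof
      assume "\<exists>j. i \<in> S j"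
      then obtain j where j: "i \<in> S j" by blast
      show "i \<in> S k"
      proof (cases "j \<le> k")
        case True
        then show ?thesis using j props(4)[of j "k - j"] by (auto simp: S_def)
      next
        case False
        then show ?thesis using j props(5)[of k "j - k"] i by (auto simp: S_def H_def)
      qed
    qed blast
    then show "w i = wS (S k) i" by (simp add: w_def wS_def)
  qed
  have "infinite {i. w i = a}"
    unfolding infinite_nat_iff_unbounded_le
  proof
    fix m
    have "Max (S m) \<in> S m" using seqG_fin[of Hs m] by (simp add: S_def)
    then show "\<exists>n\<ge>m. n \<in> {i. w i = a}" using props(2)[of m]
      by (intro exI[of _ "Max (S m)"]) (auto simp: w_def S_def)
  qed
  then have Lw: "L_pos A w = 1" using LA by (simp add: L_I_def)
  define D where "D k = Dset A w (Max (S k) + 1) (H k)" for k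
  let ?M = "run_measure A w"
  interpret prob_space ?M by (rule rm_prob)
  have Ds: "D k \<in> sets ?M" for k unfolding D_def by (rule detm_sets[OF rm_sets Dset_detm])
  have Dm: "measure ?M (D k) \<ge> 1 - 1 / (real k + 1)" for k
  proof -
    have e: "D k = Dset A (wS (S k)) (Max (S k) + 1) (H k)"
      unfolding D_def by (rule Dset_word[OF agree])
    have "emeasure ?M (D k) = emeasure (run_measure A (wS (S k))) (D k)"
      by (rule detm_emeasure_eq[OF spec_rm spec_rm agree]) (simp add: D_def Dset_detm)
    then have "measure ?M (D k) = measure (run_measure A (wS (S k))) (Dset A (wS (S k)) (Max (S k) + 1) (H k))"
      by (simp add: measure_def e)
    then show ?thesis using PS[of k] unfolding P_def by simp
  qed
  have "ereal (1/2) < L_pos A w" using Lw by simp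
  then obtain \<eta> where \<eta>: "measure ?M (runs_ge A w \<eta>) > 0" "ereal (1/2) < ereal \<eta>"
    unfolding L_pos_def less_Sup_iff by auto
  define U where "U = (\<Union>K. \<Inter>k\<in>{K..}. (UNIV - D k))"
  have sub: "runs_ge A w \<eta> \<subseteq> U"
  proof
    fix r assume r: "r \<in> runs_ge A w \<eta>"
    then have le: "ereal \<eta> \<le> liminf (\<lambda>n. ereal (avg A w r n))"
      unfolding runs_ge_def LimAvg_avg by simp
    have "1/2 < \<eta>" using \<eta>(2) by simp
    then have "ereal (1/4) < ereal \<eta>" by simp
    then have "ereal (1/4) < liminf (\<lambda>n. ereal (avg A w r n))"
      using le by (rule less_le_trans)
    then have "eventually (\<lambda>n. ereal (1/4) < ereal (avg A w r n)) sequentially"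
      by (rule less_LiminfD)
    then obtain N0 where N0: "\<forall>n\<ge>N0. 1/4 < avg A w r n"
      by (auto simp: eventually_sequentially)
    have "r \<in> (\<Inter>k\<in>{N0..}. (UNIV - D k))"
    proof
      fix k assume k: "k \<in> {N0..}"
      have "\<not> (N0 \<le> T \<and> avg A w r T < 1/4)" for T using N0 not_less_iff_gr_or_eq by blast
      moreover have "k \<le> Max (S k)" using props(2)[of k] by (simp add: S_def)
      ultimately show "r \<in> UNIV - D k" using k by (auto simp: D_def Dset_def)
    qed
    then show "r \<in> U" unfolding U_def by blast
  qed
  have null: "(\<Inter>k\<in>{K..}. (UNIV - D k)) \<in> null_sets ?M" for K
  proof -
    have Dc: "UNIV - D k \<in> sets ?M" for k using sets.compl_sets[OF Ds[of k]] by (simp add: rm_space)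
    have I: "(\<Inter>k\<in>{K..}. (UNIV - D k)) \<in> sets ?M"
      using Dc by (intro sets.countable_INT) auto
    have "\<forall>k\<ge>K. measure ?M (\<Inter>k\<in>{K..}. (UNIV - D k)) \<le> 1 / (real k + 1)"
    proof (intro allI impI)
      fix k assume k: "K \<le> k"
      have "measure ?M (\<Inter>k\<in>{K..}. (UNIV - D k)) \<le> measure ?M (UNIV - D k)"
        using k Dc by (intro finite_measure_mono) auto
      also have "\<dots> = 1 - measure ?M (D k)" using prob_compl[OF Ds[of k]] by (simp add: rm_space)
      finally show "measure ?M (\<Inter>k\<in>{K..}. (UNIV - D k)) \<le> 1 / (real k + 1)" using Dm[of k] by simp
    qed
    then have "measure ?M (\<Inter>k\<in>{K..}. (UNIV - D k)) \<le> 0" by (rule small_le)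
    then have "measure ?M (\<Inter>k\<in>{K..}. (UNIV - D k)) = 0" using measure_nonneg antisym by blast
    then show ?thesis using I by (metis emeasure_eq_measure ennreal_0 null_setsI)
  qed
  have "U \<in> null_sets ?M" unfolding U_def using null by (intro null_sets_UN) auto
  then have "measure ?M (runs_ge A w \<eta>) \<le> measure ?M U"
    using sub by (intro finite_measure_mono) auto
  also have "measure ?M U = 0" using \<open>U \<in> null_sets ?M\<close> by (simp add: measure_def null_setsD1)
  finally show False using \<eta>(1) by simp
qed


definition B :: pwa where
  "B = \<lparr>pwa_states = {0,1}, pwa_init = pmf_of_set {0,1},
        pwa_trans = (\<lambda>q \<sigma>. if q = 0 \<and> \<sigma> = a then pmf_of_set {0,1} else return_pmf q),
        pwa_weight = (\<lambda>q \<sigma> q'. if q = 1 then 1 else 0)\<rparr>"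

lemma B_simps: "pwa_init B = pmf_of_set {0,1}"
  "pwa_trans B q \<sigma> = (if q = 0 \<and> \<sigma> = a then pmf_of_set {0,1} else return_pmf q)"
  "pwa_weight B q \<sigma> q' = (if q = 1 then 1 else 0)"
  "pwa_states B = {0,1}"
  by (simp_all add: B_def)

lemma wf_B: "wf_pwa B"
  unfolding wf_pwa_def by (auto simp: B_simps)

lemma set_pmf_01: "set_pmf (pmf_of_set {0::nat,1}) = {0,1}"
  by simp

lemma run01: "is_run B w r \<Longrightarrow> r i \<in> {0,1}"
proof (induction i)
  case 0
  then have "r 0 \<in> set_pmf (pwa_init B)" unfolding is_run_def by (simp add: set_pmf_eq')
  then show ?case by (simp add: B_simps)
next
  case (Suc i)
  then have "r (Suc i) \<in> set_pmf (pwa_trans B (r i) (w i))" unfolding is_run_def by (simp add: set_pmf_eq')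
  then show ?case using Suc by (auto simp: B_simps split: if_splits)
qed

lemma run1: "is_run B w r \<Longrightarrow> r i = 1 \<Longrightarrow> r (Suc i) = 1"
proof -
  assume r: "is_run B w r" and ri: "r i = 1"
  from r have "pmf (pwa_trans B (r i) (w i)) (r (Suc i)) > 0" by (simp add: is_run_def)
  then have "r (Suc i) \<in> set_pmf (pwa_trans B (r i) (w i))" by (simp add: set_pmf_iff)
  then show ?thesis using ri by (simp add: B_simps)
qed

lemma run1_ge: "is_run B w r \<Longrightarrow> r p = 1 \<Longrightarrow> p \<le> i \<Longrightarrow> r i = 1"
proof (induction i)
  case (Suc i) then show ?case using run1 by (cases "p = Suc i") auto
qed simp

lemma wsB: "weight_seq B w r i = (if r i = 1 then 1 else 0)"
  by (simp add: weight_seq_def B_simps)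

definition Z :: "(nat \<Rightarrow> nat) set" where "Z = {r. \<forall>i. r i = 0}"

lemma LimAvg_Z: "r \<in> Z \<Longrightarrow> LimAvg (weight_seq B w r) = 0"
proof -
  assume "r \<in> Z"
  then have "(\<lambda>n. ereal ((\<Sum>i<n. weight_seq B w r i) / real n)) = (\<lambda>n. 0)"
    by (simp add: wsB Z_def fun_eq_iff)
  moreover have "liminf (\<lambda>n. 0::ereal) = 0" by (rule Liminf_const) simp
  ultimately show ?thesis unfolding LimAvg_def by simp
qed

lemma LimAvg_notZ:
  assumes r: "is_run B w r" and nz: "r \<notin> Z"
  shows "LimAvg (weight_seq B w r) = 1"
proof -
  obtain p where "r p \<noteq> 0" using nz by (auto simp: Z_def)
  then have p: "r p = 1" using run01[OF r, of p] by auto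
  define f where "f n = (\<Sum>i<n. weight_seq B w r i) / real n" for n
  have up: "f n \<le> 1" for n
  proof (cases "n = 0")
    case False
    have "(\<Sum>i<n. weight_seq B w r i) \<le> (\<Sum>i<n. 1)" by (intro sum_mono) (simp add: wsB)
    then show ?thesis using False by (simp add: f_def)
  qed (simp add: f_def)
  have lo: "1 - real p / real n \<le> f n" if n: "n \<ge> p" "n > 0" for n
  proof -
    have "(\<Sum>i\<in>{p..<n}. weight_seq B w r i) \<le> (\<Sum>i<n. weight_seq B w r i)"
      by (intro sum_mono2) (auto simp: wsB)
    moreover have "(\<Sum>i\<in>{p..<n}. weight_seq B w r i) = real (n - p)"
      using run1_ge[OF r p] by (simp add: wsB)
    ultimately have "real n - real p \<le> (\<Sum>i<n. weight_seq B w r i)" using n by simp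
    then have "(real n - real p) / real n \<le> (\<Sum>i<n. weight_seq B w r i) / real n"
      by (intro divide_right_mono) auto
    moreover have "(real n - real p) / real n = 1 - real p / real n" using n by (simp add: diff_divide_distrib)
    ultimately show ?thesis by (simp add: f_def)
  qed
  have "(\<lambda>n. 1 - real p / real n) \<longlonglongrightarrow> 1 - 0"
    by (intro tendsto_diff tendsto_const lim_const_over_n)
  then have l: "(\<lambda>n. 1 - real p / real n) \<longlonglongrightarrow> 1" by simp
  have ev1: "\<forall>\<^sub>F n in sequentially. 1 - real p / real n \<le> f n"
    using lo by (auto simp: eventually_sequentially intro!: exI[of _ "Suc p"])
  have ev2: "\<forall>\<^sub>F n in sequentially. f n \<le> 1" using up by simp
  have "f \<longlonglongrightarrow> 1" by (rule tendsto_sandwich[OF ev1 ev2 l tendsto_const])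
  then have "(\<lambda>n. ereal (f n)) \<longlonglongrightarrow> ereal 1" by (rule tendsto_ereal)
  then have "liminf (\<lambda>n. ereal (f n)) = ereal 1" by (intro lim_imp_Liminf) simp_all
  then show ?thesis unfolding LimAvg_def f_def by (simp add: one_ereal_def)
qed

lemma runs_ge_B:
  "runs_ge B w \<eta> = (if \<eta> \<le> 0 then runset B w else if \<eta> \<le> 1 then runset B w - Z else {})"
proof -
  have "r \<in> runs_ge B w \<eta> \<longleftrightarrow> r \<in> (if \<eta> \<le> 0 then runset B w else if \<eta> \<le> 1 then runset B w - Z else {})" for r
  proof (cases "is_run B w r")
    case True
    show ?thesis
    proof (cases "r \<in> Z")
      case True then show ?thesis using \<open>is_run B w r\<close> LimAvg_Z[of r w]
        by (auto simp: runs_ge_def runset_def)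
    next
      case False then show ?thesis using \<open>is_run B w r\<close> LimAvg_notZ[of w r]
        by (auto simp: runs_ge_def runset_def)
    qed
  qed (auto simp: runs_ge_def runset_def)
  then show ?thesis by blast
qed

lemma small_le2:
  fixes x :: real
  assumes "\<forall>k\<ge>K. x \<le> 1 / (real k + 1)"
  shows "x \<le> 0"
proof (rule ccontr)
  assume "\<not> x \<le> 0"
  then have x: "x > 0" by simp
  obtain n :: nat where n: "1 / x < real n" using reals_Archimedean2 by blast
  have "x \<le> 1 / (real (max K n) + 1)" using assms by simp
  also have "\<dots> \<le> 1 / (real n + 1)" by (intro divide_left_mono) auto
  finally have "x * (real n + 1) \<le> 1" by (simp add: field_simps)
  moreover have "1 < x * real n" using n x by (simp add: field_simps)
  ultimately show False using x by (simp add: algebra_simps)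
qed

definition ca :: "word \<Rightarrow> nat \<Rightarrow> nat" where "ca w n = card {i. i < n \<and> w i = a}"

lemma prod_B0: "(\<Prod>i<n. pmf (pwa_trans B 0 (w i)) 0) = (1/2) ^ ca w n"
proof (induction n)
  case 0 then show ?case by (simp add: ca_def)
next
  case (Suc n)
  have e: "{i. i < Suc n \<and> w i = a} = (if w n = a then insert n {i. i < n \<and> w i = a} else {i. i < n \<and> w i = a})"
    by (auto simp: less_Suc_eq)
  have c: "ca w (Suc n) = (if w n = a then Suc (ca w n) else ca w n)"
    unfolding ca_def e by simp
  show ?case using Suc by (cases "w n") (simp_all add: c B_simps)
qed

lemma cylZ: "emeasure (run_measure B w) {r. \<forall>i\<le>n. r i = 0} = ennreal ((1/2) * (1/2) ^ ca w n)"
proof -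
  have "emeasure (run_measure B w) {r. \<forall>i\<le>n. r i = (\<lambda>_. 0) i} =
    ennreal (pmf (pwa_init B) ((\<lambda>_. 0) 0) * (\<Prod>i<n. pmf (pwa_trans B ((\<lambda>_. 0) i) (w i)) ((\<lambda>_. 0) (Suc i))))"
  proof -
    have "\<forall>n q. emeasure (run_measure B w) {r. \<forall>i\<le>n. r i = q i} =
        ennreal (pmf (pwa_init B) (q 0) * (\<Prod>i<n. pmf (pwa_trans B (q i) (w i)) (q (Suc i))))"
      using spec_rm[of B w] unfolding run_measure_spec_def by blast
    from this[rule_format, of n "\<lambda>_. 0"] show ?thesis .
  qed
  then have "emeasure (run_measure B w) {r. \<forall>i\<le>n. r i = 0} = ennreal (pmf (pwa_init B) 0 * (1/2) ^ ca w n)"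
    by (simp only: prod_B0)
  then show ?thesis by (simp add: B_simps)
qed

lemma Z_sets: "Z \<in> sets (run_measure B w)"
proof -
  have "Z = (\<Inter>n. {r. \<forall>i\<le>n. r i = 0})" by (auto simp: Z_def)
  also have "\<dots> \<in> sets (run_measure B w)"
    using cyl_sets[of _ "\<lambda>_. 0"] rm_sets[of B w] by (intro sets.countable_INT) auto
  finally show ?thesis .
qed

lemma Z_le: "measure (run_measure B w) Z \<le> (1/2) ^ ca w n"
proof -
  interpret prob_space "run_measure B w" by (rule rm_prob)
  have "measure (run_measure B w) Z \<le> measure (run_measure B w) {r. \<forall>i\<le>n. r i = 0}"
    using cyl_sets[of n "\<lambda>_. 0"] rm_sets[of B w] by (intro finite_measure_mono) (auto simp: Z_def)
  also have "\<dots> = (1/2) * (1/2) ^ ca w n" using cylZ[of w n] by (simp add: measure_def)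
  also have "\<dots> \<le> (1/2) ^ ca w n" by simp
  finally show ?thesis .
qed

lemma Z_ge:
  assumes fin: "finite {i. w i = a}"
  shows "measure (run_measure B w) Z \<ge> (1/2) * (1/2) ^ card {i. w i = a}"
proof -
  interpret prob_space "run_measure B w" by (rule rm_prob)
  let ?C = "\<lambda>n. {r. \<forall>i\<le>n. r i = (0::nat)}"
  have lim: "(\<lambda>n. measure (run_measure B w) (?C n)) \<longlonglongrightarrow> measure (run_measure B w) (\<Inter>n. ?C n)"
    using cyl_sets[of _ "\<lambda>_. 0"] rm_sets[of B w]
    by (intro finite_Lim_measure_decseq) (auto simp: decseq_def)
  have ZC: "(\<Inter>n. ?C n) = Z" by (auto simp: Z_def)
  have bnd: "(1/2) * (1/2) ^ card {i. w i = a} \<le> measure (run_measure B w) (?C n)" for n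
  proof -
    have "ca w n \<le> card {i. w i = a}" unfolding ca_def using fin by (intro card_mono) auto
    then have "(1/2::real) ^ card {i. w i = a} \<le> (1/2) ^ ca w n" by (intro power_decreasing) auto
    then show ?thesis using cylZ[of w n] by (simp add: measure_def)
  qed
  have "(1/2) * (1/2) ^ card {i. w i = a} \<le> measure (run_measure B w) (\<Inter>n. ?C n)"
    using bnd by (intro LIMSEQ_le_const[OF lim]) blast
  then show ?thesis using ZC by simp
qed

lemma Sup_le_eq: "Sup (ereal ` {\<eta>. \<eta> \<le> c}) = ereal c"
  by (rule antisym) (auto intro!: Sup_least Sup_upper)

lemma part3: "\<exists>A. wf_pwa A \<and> (\<forall>w. L_as A w = ereal (L_I w))"
proof (intro exI conjI allI)
  show "wf_pwa B" by (rule wf_B)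
  fix w
  let ?M = "run_measure B w"
  interpret prob_space ?M by (rule rm_prob)
  have R1: "measure ?M (runset B w) = 1" by (rule runset_prob)
  have Rs: "runset B w \<in> sets ?M" by (rule runset_sets[OF rm_sets])
  have RZ: "measure ?M (runset B w - Z) = 1 - measure ?M (runset B w \<inter> Z)"
    using finite_measure_Diff'[OF Rs Z_sets] R1 by simp
  have RZ2: "measure ?M (runset B w \<inter> Z) \<le> measure ?M Z"
    using Z_sets by (intro finite_measure_mono) auto
  show "L_as B w = ereal (L_I w)"
  proof (cases "finite {i. w i = a}")
    case True
    have Zp: "measure ?M Z > 0"
      using Z_ge[OF True] by (rule less_le_trans[rotated]) simp
    have "measure ?M (runset B w \<inter> Z) = measure ?M Z"
    proof -
      have "measure ?M (Z - runset B w) \<le> measure ?M (UNIV - runset B w)"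
        using sets.compl_sets[OF Rs] by (intro finite_measure_mono) (auto simp: rm_space)
      also have "\<dots> = 0" using prob_compl[OF Rs] R1 by (simp add: rm_space)
      finally have "measure ?M (Z - runset B w) = 0" using measure_nonneg antisym by blast
      then show ?thesis using finite_measure_Diff'[OF Z_sets Rs] by (simp add: Int_commute)
    qed
    then have lt: "measure ?M (runset B w - Z) < 1" using RZ Zp by simp
    have "{\<eta>. measure ?M (runs_ge B w \<eta>) = 1} = {\<eta>. \<eta> \<le> 0}"
      using R1 lt by (auto simp: runs_ge_B split: if_splits)
    then show ?thesis using True by (simp add: L_as_def L_I_def Sup_le_eq zero_ereal_def)
  next
    case False
    have "measure ?M Z \<le> 0"
    proof (rule small_le2[of 0], intro allI impI)
      fix k :: nat
      obtain F where F: "F \<subseteq> {i. w i = a}" "finite F" "card F = k"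
        using infinite_arbitrarily_large[OF False] by blast
      define n where "n = Suc (Max (insert 0 F))"
      have "F \<subseteq> {i. i < n \<and> w i = a}" using F by (auto simp: n_def le_imp_less_Suc)
      then have "k \<le> ca w n" unfolding ca_def using F by (metis card_mono finite_Collect_conjI finite_Collect_less_nat)
      then have "(1/2::real) ^ ca w n \<le> (1/2) ^ k" by (intro power_decreasing) auto
      also have "(1/2::real) ^ k \<le> 1 / (real k + 1)"
      proof -
        have "real k + 1 \<le> 2 ^ k" by (induction k) auto
        then show ?thesis by (simp add: power_one_over field_simps)
      qed
      finally show "measure ?M Z \<le> 1 / (real k + 1)" using Z_le[of w n] by linarith
    qed
    then have "measure ?M (runset B w - Z) = 1" using RZ RZ2 measure_nonneg[of ?M "runset B w \<inter> Z"] by linarith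
    then have "{\<eta>. measure ?M (runs_ge B w \<eta>) = 1} = {\<eta>. \<eta> \<le> 1}"
      using R1 by (auto simp: runs_ge_B split: if_splits)
    then show ?thesis using False by (simp add: L_as_def L_I_def Sup_le_eq one_ereal_def)
  qed
qed


definition stp :: "pwa \<Rightarrow> nat \<Rightarrow> sigma \<Rightarrow> nat \<Rightarrow> bool" where
  "stp A q \<sigma> q' \<longleftrightarrow> pmf (pwa_trans A q \<sigma>) q' > 0"

definition wt :: "pwa \<Rightarrow> nat \<Rightarrow> sigma \<Rightarrow> nat \<Rightarrow> real" where
  "wt A q \<sigma> q' = real_of_rat (pwa_weight A q \<sigma> q')"

definition reach :: "pwa \<Rightarrow> nat \<Rightarrow> bool" where
  "reach A q \<longleftrightarrow> (\<exists>n u \<rho>. pmf (pwa_init A) (\<rho> 0) > 0 \<and> (\<forall>i<n. stp A (\<rho> i) (u i) (\<rho> (Suc i))) \<and> \<rho> n = q)"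

definition bwalk :: "pwa \<Rightarrow> (nat \<Rightarrow> nat) \<Rightarrow> nat \<Rightarrow> bool" where
  "bwalk A \<rho> n \<longleftrightarrow> (\<forall>i<n. stp A (\<rho> i) b (\<rho> (Suc i)))"

definition bsum :: "pwa \<Rightarrow> (nat \<Rightarrow> nat) \<Rightarrow> nat \<Rightarrow> real" where
  "bsum A \<rho> n = (\<Sum>i<n. wt A (\<rho> i) b (\<rho> (Suc i)))"

lemma reach_step:
  assumes "reach A q" "stp A q \<sigma> q'"
  shows "reach A q'"
proof -
  obtain n u \<rho> where h: "pmf (pwa_init A) (\<rho> 0) > 0" "\<forall>i<n. stp A (\<rho> i) (u i) (\<rho> (Suc i))" "\<rho> n = q"
    using assms(1) unfolding reach_def by blast
  let ?\<rho> = "\<rho>(Suc n := q')" and ?u = "u(n := \<sigma>)"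
  have "\<forall>i<Suc n. stp A (?\<rho> i) (?u i) (?\<rho> (Suc i))"
    using h assms(2) by (auto simp: less_Suc_eq)
  moreover have "pmf (pwa_init A) (?\<rho> 0) > 0" using h by simp
  ultimately show ?thesis unfolding reach_def by (intro exI[of _ "Suc n"] exI[of _ ?u] exI[of _ ?\<rho>]) simp
qed

lemma reach_walk:
  assumes "reach A (\<rho> 0)" "bwalk A \<rho> n"
  shows "i \<le> n \<Longrightarrow> reach A (\<rho> i)"
proof (induction i)
  case (Suc i)
  then show ?case using reach_step[of A "\<rho> i" b "\<rho> (Suc i)"] assms(2) by (auto simp: bwalk_def)
qed (use assms in simp)

lemma reach_in:
  assumes wf: "wf_pwa A" and r: "reach A q"
  shows "q \<in> pwa_states A"
proof -
  obtain n u \<rho> where h: "pmf (pwa_init A) (\<rho> 0) > 0" "\<forall>i<n. stp A (\<rho> i) (u i) (\<rho> (Suc i))" "\<rho> n = q"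
    using r unfolding reach_def by blast
  have "i \<le> n \<Longrightarrow> \<rho> i \<in> pwa_states A" for i
  proof (induction i)
    case 0 then show ?case using h(1) wf unfolding wf_pwa_def by (auto simp: set_pmf_iff)
  next
    case (Suc i)
    then have "i < n" by simp
    then have "\<rho> (Suc i) \<in> set_pmf (pwa_trans A (\<rho> i) (u i))" using h(2) by (auto simp: stp_def set_pmf_iff)
    then show ?case using Suc wf unfolding wf_pwa_def by auto
  qed
  then show ?thesis using h(3) by auto
qed

definition Wb :: "pwa \<Rightarrow> real" where
  "Wb A = Max (insert 0 ((\<lambda>(q, \<sigma>, q'). \<bar>wt A q \<sigma> q'\<bar>) ` (pwa_states A \<times> {a, b} \<times> pwa_states A)))"

lemma Wb_ge0: "wf_pwa A \<Longrightarrow> 0 \<le> Wb A"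
  unfolding Wb_def wf_pwa_def by (intro Max_ge) auto

lemma Wb_bound:
  assumes "wf_pwa A" "q \<in> pwa_states A" "q' \<in> pwa_states A"
  shows "\<bar>wt A q \<sigma> q'\<bar> \<le> Wb A"
proof -
  have "(q, \<sigma>, q') \<in> pwa_states A \<times> {a, b} \<times> pwa_states A" using assms by (cases \<sigma>) auto
  then have "\<bar>wt A q \<sigma> q'\<bar> \<in> insert 0 ((\<lambda>(q, \<sigma>, q'). \<bar>wt A q \<sigma> q'\<bar>) ` (pwa_states A \<times> {a, b} \<times> pwa_states A))"
    by force
  then show ?thesis unfolding Wb_def using assms(1) unfolding wf_pwa_def by (intro Max_ge) auto
qed

lemma decomp:
  assumes wf: "wf_pwa A"
    and nocyc: "\<And>c L. reach A (c 0) \<Longrightarrow> c L = c 0 \<Longrightarrow> bwalk A c L \<Longrightarrow> bsum A c L \<le> 0"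
  shows "reach A (\<rho> 0) \<Longrightarrow> bwalk A \<rho> n \<Longrightarrow> bsum A \<rho> n \<le> real (card (pwa_states A)) * Wb A"
proof (induction n arbitrary: \<rho> rule: less_induct)
  case (less n)
  let ?Q = "pwa_states A"
  have finQ: "finite ?Q" using wf unfolding wf_pwa_def by blast
  have inQ: "i \<le> n \<Longrightarrow> \<rho> i \<in> ?Q" for i using reach_walk[OF less.prems] reach_in[OF wf] by blast
  show ?case
  proof (cases "n \<le> card ?Q")
    case True
    have "bsum A \<rho> n \<le> real (card {..<n}) * Wb A"
      unfolding bsum_def
    proof (rule sum_bounded_above)
      fix i assume "i \<in> {..<n}"
      then show "wt A (\<rho> i) b (\<rho> (Suc i)) \<le> Wb A"
        using Wb_bound[OF wf inQ[of i] inQ[of "Suc i"], of b] by auto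
    qed
    also have "\<dots> \<le> real (card ?Q) * Wb A" using True Wb_ge0[OF wf] by (intro mult_right_mono) auto
    finally show ?thesis .
  next
    case False
    have "\<rho> ` {..card ?Q} \<subseteq> ?Q" using False inQ by auto
    moreover have "card ?Q < card {..card ?Q}" by simp
    ultimately have "\<not> inj_on \<rho> {..card ?Q}" using card_inj_on_le[of \<rho> "{..card ?Q}" ?Q] finQ by linarith
    then obtain s t where st: "s < t" "t \<le> card ?Q" "\<rho> s = \<rho> t"
      unfolding inj_on_def by (metis atMost_iff linorder_neqE_nat)
    define d where "d = t - s"
    have d: "d > 0" "s + d = t" using st by (auto simp: d_def)
    define \<rho>' where "\<rho>' i = (if i < s then \<rho> i else \<rho> (i + d))" for i
    define n' where "n' = n - d"
    have tn: "t < n" using st False by simp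
    have n'n: "n' < n" using d tn by (simp add: n'_def)
    have rS: "\<rho>' (Suc i) = \<rho> (Suc i)" if "i < s" for i
    proof (cases "Suc i < s")
      case False
      then have "Suc i = s" using that by simp
      then show ?thesis using st d by (simp add: \<rho>'_def)
    qed (simp add: \<rho>'_def)
    have g'lo: "wt A (\<rho>' i) b (\<rho>' (Suc i)) = wt A (\<rho> i) b (\<rho> (Suc i))" if "i < s" for i
      using that rS[OF that] by (simp add: \<rho>'_def)
    have g'hi: "wt A (\<rho>' i) b (\<rho>' (Suc i)) = wt A (\<rho> (i + d)) b (\<rho> (Suc (i + d)))" if "s \<le> i" for i
      using that by (auto simp: \<rho>'_def)
    have walk': "bwalk A \<rho>' n'"
      unfolding bwalk_def
    proof (intro allI impI)
      fix i assume i: "i < n'"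
      show "stp A (\<rho>' i) b (\<rho>' (Suc i))"
      proof (cases "i < s")
        case True
        then have "\<rho>' i = \<rho> i" "\<rho>' (Suc i) = \<rho> (Suc i)" using rS by (auto simp: \<rho>'_def)
        then show ?thesis using less.prems(2) True st tn unfolding bwalk_def by auto
      next
        case False
        then have "\<rho>' i = \<rho> (i + d)" "\<rho>' (Suc i) = \<rho> (Suc (i + d))" by (auto simp: \<rho>'_def)
        moreover have "i + d < n" using i d tn by (simp add: n'_def)
        ultimately show ?thesis using less.prems(2) unfolding bwalk_def by auto
      qed
    qed
    have r0: "\<rho>' 0 = \<rho> 0" using st d by (cases "s = 0") (auto simp: \<rho>'_def)
    have IH: "bsum A \<rho>' n' \<le> real (card ?Q) * Wb A"
      using less.IH[OF n'n, of \<rho>'] walk' less.prems(1) r0 by simp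
    define c where "c j = \<rho> (s + j)" for j
    have cyc: "bsum A c d \<le> 0"
    proof (rule nocyc)
      show "reach A (c 0)" using reach_walk[OF less.prems, of s] st tn by (simp add: c_def)
      show "c d = c 0" using st d by (simp add: c_def)
      show "bwalk A c d" using less.prems(2) d tn unfolding bwalk_def c_def by auto
    qed
    let ?g = "\<lambda>i. wt A (\<rho> i) b (\<rho> (Suc i))"
    have "bsum A \<rho> n = (\<Sum>i\<in>{0..<s}. ?g i) + (\<Sum>i\<in>{s..<t}. ?g i) + (\<Sum>i\<in>{t..<n}. ?g i)"
      unfolding bsum_def lessThan_atLeast0 using st tn by (simp add: sum.atLeastLessThan_concat)
    also have "(\<Sum>i\<in>{s..<t}. ?g i) = bsum A c d"
      unfolding bsum_def c_def using d sum.shift_bounds_nat_ivl[of ?g 0 s d]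
      by (simp add: lessThan_atLeast0 add.commute)
    also have "(\<Sum>i\<in>{t..<n}. ?g i) = (\<Sum>i\<in>{s..<n'}. ?g (i + d))"
      using sum.shift_bounds_nat_ivl[of ?g s d n'] d tn by (simp add: n'_def)
    also have "(\<Sum>i\<in>{0..<s}. ?g i) + bsum A c d + (\<Sum>i\<in>{s..<n'}. ?g (i + d))
        \<le> (\<Sum>i\<in>{0..<s}. ?g i) + (\<Sum>i\<in>{s..<n'}. ?g (i + d))" using cyc by simp
    also have "\<dots> = bsum A \<rho>' n'"
    proof -
      have "bsum A \<rho>' n' = (\<Sum>i\<in>{0..<s}. wt A (\<rho>' i) b (\<rho>' (Suc i))) + (\<Sum>i\<in>{s..<n'}. wt A (\<rho>' i) b (\<rho>' (Suc i)))"
        unfolding bsum_def lessThan_atLeast0 using st tn d by (simp add: sum.atLeastLessThan_concat n'_def)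
      also have "\<dots> = (\<Sum>i\<in>{0..<s}. ?g i) + (\<Sum>i\<in>{s..<n'}. ?g (i + d))"
        using g'lo g'hi by (intro arg_cong2[where f="(+)"] sum.cong) auto
      finally show ?thesis by simp
    qed
    finally show ?thesis using IH by simp
  qed
qed

lemma per_full:
  fixes g :: "nat \<Rightarrow> real"
  shows "(\<Sum>k<q*L. g (k mod L)) = real q * (\<Sum>j<L. g j)"
proof (induction q)
  case (Suc q)
  have "(\<Sum>k<Suc q * L. g (k mod L)) = (\<Sum>k\<in>{0..<q*L}. g (k mod L)) + (\<Sum>k\<in>{q*L..<q*L+L}. g (k mod L))"
    by (simp add: lessThan_atLeast0 sum.atLeastLessThan_concat add.commute)
  also have "(\<Sum>k\<in>{q*L..<q*L+L}. g (k mod L)) = (\<Sum>j\<in>{0..<L}. g ((j + q*L) mod L))"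
    using sum.shift_bounds_nat_ivl[of "\<lambda>k. g (k mod L)" 0 "q*L" L] by (simp add: add.commute)
  also have "\<dots> = (\<Sum>j<L. g j)" by (simp add: lessThan_atLeast0)
  finally show ?case using Suc by (simp add: lessThan_atLeast0 algebra_simps)
qed simp

lemma per_sum:
  fixes g :: "nat \<Rightarrow> real"
  assumes L: "L > 0"
  shows "(\<Sum>k<m. g (k mod L)) \<ge> real (m div L) * (\<Sum>j<L. g j) - (\<Sum>j<L. \<bar>g j\<bar>)"
proof -
  let ?q = "m div L" and ?r = "m mod L"
  have m: "m = ?q * L + ?r" by simp
  have "(\<Sum>k<m. g (k mod L)) = (\<Sum>k\<in>{0..<?q*L}. g (k mod L)) + (\<Sum>k\<in>{?q*L..<?q*L+?r}. g (k mod L))"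
    by (subst m, subst lessThan_atLeast0, rule sum.atLeastLessThan_concat[symmetric]) auto
  also have "(\<Sum>k\<in>{?q*L..<?q*L+?r}. g (k mod L)) = (\<Sum>j\<in>{0..<?r}. g ((j + ?q*L) mod L))"
    using sum.shift_bounds_nat_ivl[of "\<lambda>k. g (k mod L)" 0 "?q*L" ?r] by simp
  also have "\<dots> = (\<Sum>j\<in>{0..<?r}. g j)"
    using L by (intro sum.cong) (auto intro: arg_cong[where f=g] mod_less less_trans[OF _ mod_less_divisor])
  also have "(\<Sum>k\<in>{0..<?q*L}. g (k mod L)) = real ?q * (\<Sum>j<L. g j)"
    using per_full[where g=g and q="?q" and L=L] by (simp add: lessThan_atLeast0)
  finally have e: "(\<Sum>k<m. g (k mod L)) = real ?q * (\<Sum>j<L. g j) + (\<Sum>j\<in>{0..<?r}. g j)" .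
  have "- (\<Sum>j\<in>{0..<?r}. \<bar>g j\<bar>) \<le> (\<Sum>j\<in>{0..<?r}. g j)"
    using sum_abs[of g "{0..<?r}"] by linarith
  moreover have "(\<Sum>j\<in>{0..<?r}. \<bar>g j\<bar>) \<le> (\<Sum>j<L. \<bar>g j\<bar>)"
    using L by (intro sum_mono2) (auto simp: lessThan_atLeast0)
  ultimately show ?thesis using e by linarith
qed

lemma pump:
  assumes rq: "reach A (c 0)" and cL: "c L = c 0" and cw: "bwalk A c L" and pos: "bsum A c L > 0"
  shows "\<exists>w r. finite {i. w i = a} \<and> is_run A w r \<and> LimAvg (weight_seq A w r) > 0"
proof -
  have L: "L > 0" using pos by (cases L) (auto simp: bsum_def)
  obtain n u \<rho> where h: "pmf (pwa_init A) (\<rho> 0) > 0" "\<forall>i<n. stp A (\<rho> i) (u i) (\<rho> (Suc i))" "\<rho> n = c 0"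
    using rq unfolding reach_def by blast
  define w where "w i = (if i < n then u i else b)" for i
  define r where "r i = (if i < n then \<rho> i else c ((i - n) mod L))" for i
  have cS: "c (Suc k mod L) = c (Suc (k mod L))" for k
    using cL L by (simp add: mod_Suc)
  have fin: "finite {i. w i = a}"
    by (rule finite_subset[of _ "{..<n}"]) (auto simp: w_def)
  have run: "is_run A w r"
    unfolding is_run_def
  proof (intro conjI allI)
    show "pmf (pwa_init A) (r 0) > 0" using h by (cases "n = 0") (auto simp: r_def)
    fix i
    show "pmf (pwa_trans A (r i) (w i)) (r (Suc i)) > 0"
    proof (cases "i < n")
      case True
      have "r (Suc i) = \<rho> (Suc i)"
      proof (cases "Suc i < n")
        case False
        then have "Suc i = n" using True by simp
        then show ?thesis using h(3) by (simp add: r_def)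
      qed (simp add: r_def)
      then show ?thesis using True h(2) by (auto simp: r_def w_def stp_def)
    next
      case False
      then have e: "Suc i - n = Suc (i - n)" by simp
      have "r (Suc i) = c (Suc ((i - n) mod L))" using False by (simp add: r_def e cS)
      moreover have "(i - n) mod L < L" using L by simp
      ultimately show ?thesis using False cw by (auto simp: r_def w_def bwalk_def stp_def)
    qed
  qed
  define g where "g j = wt A (c j) b (c (Suc j))" for j
  have ws: "weight_seq A w r (n + k) = g (k mod L)" for k
  proof -
    have "r (Suc (n + k)) = c (Suc (k mod L))" using cS[of k] by (simp add: r_def)
    then show ?thesis by (simp add: weight_seq_def w_def r_def g_def wt_def)
  qed
  define C0 where "C0 = (\<Sum>i<n. weight_seq A w r i)"
  define S where "S = (\<Sum>j<L. g j)"
  define G where "G = (\<Sum>j<L. \<bar>g j\<bar>)"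
  have S: "S > 0" using pos by (simp add: S_def g_def bsum_def)
  have sumeq: "(\<Sum>i<n+m. weight_seq A w r i) = C0 + (\<Sum>k<m. g (k mod L))" for m
  proof -
    have "(\<Sum>i<n+m. weight_seq A w r i) = (\<Sum>i\<in>{0..<n}. weight_seq A w r i) + (\<Sum>i\<in>{n..<n+m}. weight_seq A w r i)"
      by (simp add: lessThan_atLeast0 sum.atLeastLessThan_concat)
    also have "(\<Sum>i\<in>{n..<n+m}. weight_seq A w r i) = (\<Sum>k\<in>{0..<m}. weight_seq A w r (k + n))"
      using sum.shift_bounds_nat_ivl[of "weight_seq A w r" 0 n m] by (simp add: add.commute)
    also have "\<dots> = (\<Sum>k<m. g (k mod L))" using ws by (simp add: lessThan_atLeast0 add.commute)
    finally show ?thesis by (simp add: C0_def lessThan_atLeast0)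
  qed
  have lb: "(\<Sum>i<n+m. weight_seq A w r i) \<ge> C0 - G - S + real m * S / real L" for m
  proof -
    have "real m < (real (m div L) + 1) * real L"
    proof -
      have "m < (m div L + 1) * L" using L by (metis add.commute div_mult_mod_eq mod_less_divisor nat_add_left_cancel_less distrib_right mult_1)
      then show ?thesis by (metis of_nat_1 of_nat_add of_nat_less_iff of_nat_mult)
    qed
    then have "real m / real L - 1 < real (m div L)" using L by (simp add: field_simps)
    then have "(real m / real L - 1) * S \<le> real (m div L) * S" using S by (intro mult_right_mono) auto
    then have "real m * S / real L - S \<le> real (m div L) * S" by (simp add: algebra_simps)
    moreover have "(\<Sum>k<m. g (k mod L)) \<ge> real (m div L) * S - G"
      using per_sum[OF L, of m g] by (simp add: S_def G_def)
    ultimately show ?thesis using sumeq[of m] by linarith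
  qed
  define c0 where "c0 = S / (2 * real L)"
  have c0: "c0 > 0" using S L by (simp add: c0_def)
  define E where "E = c0 * real n + G + S - C0"
  obtain M0 :: nat where M0: "E * (2 * real L) / S \<le> real M0" using real_arch_simple by blast
  have ev: "ereal c0 \<le> ereal (avg A w r N)" if N: "N \<ge> n + M0 + 1" for N
  proof -
    define m where "m = N - n"
    have Nm: "N = n + m" "m \<ge> M0" using N by (auto simp: m_def)
    have "E \<le> real M0 * S / (2 * real L)" using M0 S L by (simp add: field_simps)
    also have "\<dots> \<le> real m * S / (2 * real L)" using Nm S L by (intro divide_right_mono mult_right_mono) auto
    finally have "E \<le> real m * S / (2 * real L)" .
    then have "c0 * real N \<le> C0 - G - S + real m * S / real L"
      unfolding E_def c0_def Nm(1) using L by (simp add: field_simps)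
    also have "\<dots> \<le> (\<Sum>i<N. weight_seq A w r i)" using lb[of m] Nm by simp
    finally have "c0 * real N \<le> (\<Sum>i<N. weight_seq A w r i)" .
    moreover have "real N > 0" using N by simp
    ultimately have "c0 \<le> avg A w r N" by (simp add: avg_def field_simps)
    then show ?thesis by simp
  qed
  have "ereal c0 \<le> LimAvg (weight_seq A w r)"
    unfolding LimAvg_avg
    by (rule Liminf_bounded) (use ev in \<open>auto simp: eventually_sequentially\<close>)
  then have "LimAvg (weight_seq A w r) > 0" using c0 by (metis ereal_less(2) less_le_trans)
  then show ?thesis using fin run by blast
qed

lemma ws_wt: "weight_seq A w r i = wt A (r i) (w i) (r (Suc i))"
  by (simp add: weight_seq_def wt_def)

lemma run_reach: "is_run A w r \<Longrightarrow> reach A (r i)"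
  unfolding reach_def is_run_def stp_def by (intro exI[of _ i] exI[of _ w] exI[of _ r]) auto

lemma part1: "\<not> (\<exists>A. wf_pwa A \<and> (\<forall>w. L_max A w = ereal (L_I w)))"
proof
  assume "\<exists>A. wf_pwa A \<and> (\<forall>w. L_max A w = ereal (L_I w))"
  then obtain A where wf: "wf_pwa A" and LA: "\<forall>w. L_max A w = ereal (L_I w)" by blast
  have nocyc: "bsum A c L \<le> 0" if c1: "reach A (c 0)" and c2: "c L = c 0" and c3: "bwalk A c L" for c L
  proof (rule ccontr)
    assume "\<not> bsum A c L \<le> 0"
    then obtain w r where wr: "finite {i. w i = a}" "is_run A w r" "LimAvg (weight_seq A w r) > 0"
      using pump[OF c1 c2 c3] by force
    have "LimAvg (weight_seq A w r) \<le> L_max A w"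
      unfolding L_max_def using wr(2) by (intro Sup_upper) blast
    moreover have "L_max A w = 0" using LA wr(1) by (simp add: L_I_def)
    ultimately show False using wr(3) by simp
  qed
  let ?W = "Wb A" and ?K = "real (card (pwa_states A)) * Wb A"
  have W0: "?W \<ge> 0" by (rule Wb_ge0[OF wf])
  have K0: "?K \<ge> 0" using W0 by simp
  define w where "w i = (if i \<in> range (fact :: nat \<Rightarrow> nat) then a else b)" for i
  have "infinite {i. w i = a}"
    unfolding infinite_nat_iff_unbounded_le
  proof
    fix m show "\<exists>n\<ge>m. n \<in> {i. w i = a}"
      by (intro exI[of _ "fact m :: nat"]) (auto simp: w_def fact_ge_self)
  qed
  then have "L_max A w = 1" using LA by (simp add: L_I_def)
  then have "ereal (1/2) < Sup {LimAvg (weight_seq A w r) | r. is_run A w r}"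
    unfolding L_max_def by simp
  then obtain r where r: "is_run A w r" "ereal (1/2) < LimAvg (weight_seq A w r)"
    unfolding less_Sup_iff by blast
  have "eventually (\<lambda>N. ereal (1/2) < ereal (avg A w r N)) sequentially"
    using r(2) unfolding LimAvg_avg by (rule less_LiminfD)
  then obtain N0 where N0: "\<forall>N\<ge>N0. 1/2 < avg A w r N" by (auto simp: eventually_sequentially)
  have inQ: "r i \<in> pwa_states A" for i using reach_in[OF wf run_reach[OF r(1)]] .
  have wsb: "\<bar>weight_seq A w r i\<bar> \<le> ?W" for i
    unfolding ws_wt using Wb_bound[OF wf inQ inQ] .
  obtain k0 :: nat where k0: "2 * (2 * ?W + ?K) < real k0" using reals_Archimedean2 by blast
  define k where "k = max (max 1 N0) k0"
  have k: "k \<ge> 1" "k \<ge> N0" "2 * (2 * ?W + ?K) < real k" using k0 by (auto simp: k_def)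
  define F where "F = (fact k :: nat)"
  define F' where "F' = (fact (Suc k) :: nat)"
  have F1: "F \<ge> 1" by (simp add: F_def)
  have F'eq: "F' = Suc k * F" by (simp add: F_def F'_def)
  have FF': "F + 1 \<le> F'" using F1 k(1) F'eq by (simp add: algebra_simps)
  have blk: "w i = b" if "F < i" "i < F'" for i
  proof -
    have "i \<notin> range (fact :: nat \<Rightarrow> nat)"
    proof
      assume "i \<in> range (fact :: nat \<Rightarrow> nat)"
      then obtain j where j: "i = fact j" by blast
      show False
      proof (cases "j \<le> k")
        case True
        then have "(fact j :: nat) \<le> fact k" by (rule fact_mono)
        then show False using that j by (simp add: F_def)
      next
        case False
        then have "(fact (Suc k) :: nat) \<le> fact j" by (intro fact_mono) simp
        then show False using that j by (simp add: F'_def)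
      qed
    qed
    then show ?thesis by (simp add: w_def)
  qed
  define len where "len = F' - (F + 1)"
  define \<rho> where "\<rho> j = r (F + 1 + j)" for j
  have walk: "bwalk A \<rho> len"
    unfolding bwalk_def
  proof (intro allI impI)
    fix j assume "j < len"
    then have "w (F + 1 + j) = b" using FF' by (intro blk) (auto simp: len_def)
    then show "stp A (\<rho> j) b (\<rho> (Suc j))" using r(1) unfolding is_run_def stp_def \<rho>_def
      by (metis add_Suc_right)
  qed
  have bs: "bsum A \<rho> len \<le> ?K"
  proof -
    have "reach A (\<rho> 0)" using run_reach[OF r(1)] by (simp add: \<rho>_def)
    then show ?thesis using decomp[OF wf nocyc _ walk] by blast
  qed
  have "(\<Sum>i<F'. weight_seq A w r i) = (\<Sum>i\<in>{0..<F+1}. weight_seq A w r i) + (\<Sum>i\<in>{F+1..<F'}. weight_seq A w r i)"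
    unfolding lessThan_atLeast0 using FF' by (intro sum.atLeastLessThan_concat[symmetric]) auto
  also have "(\<Sum>i\<in>{F+1..<F'}. weight_seq A w r i) = bsum A \<rho> len"
  proof -
    have "(\<Sum>i\<in>{F+1..<F'}. weight_seq A w r i) = (\<Sum>j\<in>{0..<len}. weight_seq A w r (j + (F + 1)))"
      using sum.shift_bounds_nat_ivl[of "weight_seq A w r" 0 "F+1" len] FF' by (simp add: len_def)
    also have "\<dots> = bsum A \<rho> len"
      unfolding bsum_def lessThan_atLeast0
    proof (rule sum.cong)
      fix j assume "j \<in> {0..<len}"
      then have "w (F + 1 + j) = b" using FF' by (intro blk) (auto simp: len_def)
      then show "weight_seq A w r (j + (F + 1)) = wt A (\<rho> j) b (\<rho> (Suc j))"
        by (simp add: ws_wt \<rho>_def add.commute)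
    qed simp
    finally show ?thesis .
  qed
  also have "(\<Sum>i\<in>{0..<F+1}. weight_seq A w r i) \<le> real (card {0..<F+1}) * ?W"
    by (rule sum_bounded_above) (use wsb in \<open>auto simp: abs_le_iff\<close>)
  finally have "(\<Sum>i<F'. weight_seq A w r i) \<le> real (F + 1) * ?W + ?K" using bs by simp
  also have "\<dots> \<le> real F * (2 * ?W + ?K)"
  proof -
    have "real (F + 1) \<le> 2 * real F" using F1 by simp
    then have "real (F + 1) * ?W \<le> (2 * real F) * ?W" using W0 by (intro mult_right_mono) auto
    then have "real (F + 1) * ?W \<le> real F * (2 * ?W)" by (simp add: algebra_simps)
    moreover have "?K \<le> real F * ?K" using F1 K0 by (simp add: mult_le_cancel_right1)
    ultimately show ?thesis by (simp add: algebra_simps)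
  qed
  finally have sumle: "(\<Sum>i<F'. weight_seq A w r i) \<le> real F * (2 * ?W + ?K)" .
  have "avg A w r F' \<le> (2 * ?W + ?K) / real (Suc k)"
  proof -
    have "avg A w r F' \<le> real F * (2 * ?W + ?K) / real F'"
      unfolding avg_def using sumle by (intro divide_right_mono) auto
    also have "\<dots> = real F * (2 * ?W + ?K) / (real F * real (Suc k))"
      by (metis F'eq of_nat_mult mult.commute)
    also have "\<dots> = (2 * ?W + ?K) / real (Suc k)" using F1 by (intro nonzero_mult_divide_mult_cancel_left) simp
    finally show ?thesis .
  qed
  also have "\<dots> < 1/2" using k(3) by (simp add: field_simps)
  finally have "avg A w r F' < 1/2" .
  moreover have "F' \<ge> N0" using k(2) fact_ge_self[of "Suc k"] by (simp add: F'_def)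
  ultimately show False using N0 by force
qed


theorem lemma3:
  shows "(\<not> (\<exists>A. wf_pwa A \<and> (\<forall>w. L_max A w = ereal (L_I w)))) \<and>
         (\<not> (\<exists>A. wf_pwa A \<and> (\<forall>w. L_pos A w = ereal (L_I w)))) \<and>
         (\<exists>A. wf_pwa A \<and> (\<forall>w. L_as A w = ereal (L_I w)))"
  using part1 part2 part3 by blast

end
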